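(* Let $q\in\,]0,1[$, $\omega\ge 0$, and let $I$ be an interval containing $\omega_0:=\omega/(1-q)$. Let $\alpha,\beta\in\mathbb{R}$ and let $f,g:I\to\mathbb{R}$ be Hahn symmetric differentiable on $I$. Then for every $t\in I^{q,\omega}$: 1. $\tilde D_{q,\omega}[\alpha f+\beta g](t)=\alpha\tilde D_{q,\omega}[f](t)+\beta\tilde D_{q,\omega}[g](t)$; 2. $\tilde D_{q,\omega}[fg](t)=\tilde D_{q,\omega}[f](t)\,g(\sigma(t))+f(\sigma^{-1}(t))\,\tilde D_{q,\omega}[g](t)$; 3. if $g(\sigma(t))\,g(\sigma^{-1}(t))\neq 0$, then $\tilde D_{q,\omega}[f/g](t)=\dfrac{\tilde D_{q,\omega}[f](t)\,g(\sigma^{-1}(t))-f(\sigma^{-1}(t))\,\tilde D_{q,\omega}[g](t)}{g(\sigma(t))\,g(\sigma^{-1}(t))}$; 4. $\tilde D_{q,\omega}[f]\equiv 0$ (on $I^{q,\omega}$) if and only if $f$ is constant on $I$.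
   Context: $\sigma(t):=qt+\omega$, $\sigma^{-1}(t):=q^{-1}(t-\omega)$, and $I^{q,\omega}:=\{qt+\omega:t\in I\}\subseteq I$. The Hahn symmetric derivative of $f:I\to\mathbb{R}$ is defined, for $t\in I^{q,\omega}\setminus\{\omega_0\}$, by $$\tilde D_{q,\omega}[f](t):=\frac{f(qt+\omega)-f(q^{-1}(t-\omega))}{(q-q^{-1})t+(1+q^{-1})\omega}=\frac{f(\sigma(t))-f(\sigma^{-1}(t))}{\sigma(t)-\sigma^{-1}(t)},$$ and $\tilde D_{q,\omega}[f](\omega_0):=f'(\omega_0)$ (classical derivative), provided $f$ is differentiable at $\omega_0$ in the classical sense. "Hahn symmetric differentiable on $I$" means that $\tilde D_{q,\omega}[f](t)$ is defined for all $t\in I^{q,\omega}$, i.e. in particular $f$ is classically differentiable at $\omega_0$. *)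

theory Defs
  imports "HOL-Analysis.Analysis"
begin

definition hsigma :: "real \<Rightarrow> real \<Rightarrow> real \<Rightarrow> real" where
  "hsigma q \<omega> t = q * t + \<omega>"

definition hsigma_inv :: "real \<Rightarrow> real \<Rightarrow> real \<Rightarrow> real" where
  "hsigma_inv q \<omega> t = (t - \<omega>) / q"

definition omega0 :: "real \<Rightarrow> real \<Rightarrow> real" where
  "omega0 q \<omega> = \<omega> / (1 - q)"

definition qw_set :: "real \<Rightarrow> real \<Rightarrow> real set \<Rightarrow> real set" where
  "qw_set q \<omega> I = (\<lambda>t. q * t + \<omega>) ` I"

text \<open>Hahn symmetric derivative of f on I; at omega0 the classical derivative
  (taken within I, since f is only defined on I).\<close>
definition hahn_sym_deriv ::
  "real \<Rightarrow> real \<Rightarrow> real set \<Rightarrow> (real \<Rightarrow> real) \<Rightarrow> real \<Rightarrow> real" where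
  "hahn_sym_deriv q \<omega> I f t =
     (if t = omega0 q \<omega> then vector_derivative f (at t within I)
      else (f (hsigma q \<omega> t) - f (hsigma_inv q \<omega> t)) /
           ((q - 1 / q) * t + (1 + 1 / q) * \<omega>))"

text \<open>Hahn symmetric differentiable on I: the derivative is defined at every point of
  I^{q,omega}; away from omega0 the quotient is always defined, so this amounts to
  classical differentiability of f at omega0 (relative to I).\<close>
definition hahn_sym_differentiable_on ::
  "real \<Rightarrow> real \<Rightarrow> real set \<Rightarrow> (real \<Rightarrow> real) \<Rightarrow> bool" where
  "hahn_sym_differentiable_on q \<omega> I f \<longleftrightarrow> f differentiable (at (omega0 q \<omega>) within I)"

end

theory Submission
  imports Defs
begin

lemma aux_fix:
  assumes "0 < q" "q < 1" shows "hsigma q w (omega0 q w) = omega0 q w" "hsigma_inv q w (omega0 q w) = omega0 q w"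
proof -
  have n: "1 - q \<noteq> 0" "q \<noteq> 0" using assms by auto
  show "hsigma q w (omega0 q w) = omega0 q w" unfolding hsigma_def omega0_def
    using n by (simp add: field_simps)
  show "hsigma_inv q w (omega0 q w) = omega0 q w" unfolding hsigma_inv_def omega0_def
    using n by (simp add: field_simps)
qed

lemma aux_den:
  assumes "0 < q" "q < 1" "t \<noteq> omega0 q w"
  shows "(q - 1 / q) * t + (1 + 1 / q) * w \<noteq> 0"
proof
  assume "(q - 1 / q) * t + (1 + 1 / q) * w = 0"
  moreover have "q * ((q - 1 / q) * t + (1 + 1 / q) * w) = (q*q - 1) * t + (q + 1) * w"
    using assms by (simp add: algebra_simps)
  ultimately have "(q*q - 1) * t + (q + 1) * w = 0" by simp
  hence "(q + 1) * ((q - 1) * t + w) = 0" by (simp add: algebra_simps)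
  hence "(q - 1) * t + w = 0" using assms by simp
  hence "w = (1 - q) * t" by (simp add: algebra_simps)
  hence "t = omega0 q w" using assms by (simp add: omega0_def)
  thus False using assms by simp
qed

lemma aux_deriv:
  assumes "at x within I \<noteq> bot" "(f has_real_derivative D) (at x within I)"
  shows "vector_derivative f (at x within I) = D"
  using assms vector_derivative_within has_real_derivative_iff_has_vector_derivative by blast

lemma alg1: fixes a b c d D al be :: real assumes "D \<noteq> 0"
  shows "(al * a + be * b - (al * c + be * d)) / D = al * ((a - c) / D) + be * ((b - d) / D)"
  using assms by (simp add: field_simps)

lemma alg2: fixes a b c d D :: real assumes "D \<noteq> 0"
  shows "(a * b - c * d) / D = (a - c) / D * b + c * ((b - d) / D)"
  using assms by (simp add: field_simps)

lemma alg3: fixes a b c d D :: real assumes "D \<noteq> 0" "b \<noteq> 0" "d \<noteq> 0"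
  shows "(a / b - c / d) / D = ((a - c) / D * d - c * ((b - d) / D)) / (b * d)"
  using assms by (simp add: field_simps)

theorem theorem2p8:
  fixes q \<omega> \<alpha> \<beta> :: real and I :: "real set" and f g :: "real \<Rightarrow> real"
  assumes q: "0 < q" "q < 1"
    and w: "\<omega> \<ge> 0"
    and I: "is_interval I" "omega0 q \<omega> \<in> I" "\<exists>x\<in>I. x \<noteq> omega0 q \<omega>"
    and f: "hahn_sym_differentiable_on q \<omega> I f"
    and g: "hahn_sym_differentiable_on q \<omega> I g"
  shows "(\<forall>t\<in>qw_set q \<omega> I.
            hahn_sym_deriv q \<omega> I (\<lambda>x. \<alpha> * f x + \<beta> * g x) t
              = \<alpha> * hahn_sym_deriv q \<omega> I f t + \<beta> * hahn_sym_deriv q \<omega> I g t)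
       \<and> (\<forall>t\<in>qw_set q \<omega> I.
            hahn_sym_deriv q \<omega> I (\<lambda>x. f x * g x) t
              = hahn_sym_deriv q \<omega> I f t * g (hsigma q \<omega> t)
                + f (hsigma_inv q \<omega> t) * hahn_sym_deriv q \<omega> I g t)
       \<and> (\<forall>t\<in>qw_set q \<omega> I.
            g (hsigma q \<omega> t) * g (hsigma_inv q \<omega> t) \<noteq> 0 \<longrightarrow>
            hahn_sym_deriv q \<omega> I (\<lambda>x. f x / g x) t
              = (hahn_sym_deriv q \<omega> I f t * g (hsigma_inv q \<omega> t)
                 - f (hsigma_inv q \<omega> t) * hahn_sym_deriv q \<omega> I g t)
                / (g (hsigma q \<omega> t) * g (hsigma_inv q \<omega> t)))
       \<and> ((\<forall>t\<in>qw_set q \<omega> I. hahn_sym_deriv q \<omega> I f t = 0) \<longleftrightarrow> (\<exists>c. \<forall>x\<in>I. f x = c))"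
proof -
  define w0 where "w0 = omega0 q \<omega>"
  have fix1: "hsigma q \<omega> w0 = w0" and fix2: "hsigma_inv q \<omega> w0 = w0"
    using aux_fix[OF q] w0_def by auto
  obtain x1 where x1: "x1 \<in> I" "x1 \<noteq> w0" using I(3) w0_def by auto
  have lim: "w0 islimpt I"
  proof (cases "x1 < w0")
    case True
    have "{x1..w0} \<subseteq> I" using I(1,2) x1 w0_def True mem_is_interval_1_I[OF I(1) x1(1) I(2)[folded w0_def]] by auto
    moreover have "w0 islimpt {x1..w0}" using True by simp
    ultimately show ?thesis using islimpt_subset by blast
  next
    case False
    hence F: "w0 < x1" using x1 by simp
    have "{w0..x1} \<subseteq> I" using I(1,2) x1 w0_def F mem_is_interval_1_I[OF I(1) I(2)[folded w0_def] x1(1)] by auto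
    moreover have "w0 islimpt {w0..x1}" using F by simp
    ultimately show ?thesis using islimpt_subset by blast
  qed
  hence nb: "at w0 within I \<noteq> bot" using trivial_limit_within by blast
  obtain Df where Df: "(f has_real_derivative Df) (at w0 within I)"
    using f unfolding hahn_sym_differentiable_on_def real_differentiable_def w0_def by blast
  obtain Dg where Dg: "(g has_real_derivative Dg) (at w0 within I)"
    using g unfolding hahn_sym_differentiable_on_def real_differentiable_def w0_def by blast
  have vf: "vector_derivative f (at w0 within I) = Df" by (rule aux_deriv[OF nb Df])
  have vg: "vector_derivative g (at w0 within I) = Dg" by (rule aux_deriv[OF nb Dg])
  have hf0: "hahn_sym_deriv q \<omega> I f w0 = Df" using vf by (simp add: hahn_sym_deriv_def w0_def)
  have hg0: "hahn_sym_deriv q \<omega> I g w0 = Dg" using vg by (simp add: hahn_sym_deriv_def w0_def)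
  have hne: "hahn_sym_deriv q \<omega> I h t = (h (hsigma q \<omega> t) - h (hsigma_inv q \<omega> t)) /
           ((q - 1 / q) * t + (1 + 1 / q) * \<omega>)" if "t \<noteq> w0" for h t
    using that by (simp add: hahn_sym_deriv_def w0_def)
  have P1: "hahn_sym_deriv q \<omega> I (\<lambda>x. \<alpha> * f x + \<beta> * g x) t
              = \<alpha> * hahn_sym_deriv q \<omega> I f t + \<beta> * hahn_sym_deriv q \<omega> I g t" for t
  proof (cases "t = w0")
    case True
    have "((\<lambda>x. \<alpha> * f x + \<beta> * g x) has_real_derivative \<alpha> * Df + \<beta> * Dg) (at w0 within I)"
      by (auto intro!: derivative_eq_intros Df Dg)
    then have "vector_derivative (\<lambda>x. \<alpha> * f x + \<beta> * g x) (at w0 within I) = \<alpha> * Df + \<beta> * Dg"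
      by (rule aux_deriv[OF nb])
    then show ?thesis using True hf0 hg0 by (simp add: hahn_sym_deriv_def w0_def)
  next
    case False
    have d: "(q - 1 / q) * t + (1 + 1 / q) * \<omega> \<noteq> 0" using aux_den[OF q] False w0_def by auto
    show ?thesis unfolding hne[OF False] by (rule alg1[OF d])
  qed
  have P2: "hahn_sym_deriv q \<omega> I (\<lambda>x. f x * g x) t
              = hahn_sym_deriv q \<omega> I f t * g (hsigma q \<omega> t)
                + f (hsigma_inv q \<omega> t) * hahn_sym_deriv q \<omega> I g t" for t
  proof (cases "t = w0")
    case True
    have "((\<lambda>x. f x * g x) has_real_derivative Df * g w0 + f w0 * Dg) (at w0 within I)"
      by (auto intro!: derivative_eq_intros Df Dg)
    then have "vector_derivative (\<lambda>x. f x * g x) (at w0 within I) = Df * g w0 + f w0 * Dg"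
      by (rule aux_deriv[OF nb])
    then show ?thesis using True hf0 hg0 fix1 fix2 by (simp add: hahn_sym_deriv_def w0_def)
  next
    case False
    have d: "(q - 1 / q) * t + (1 + 1 / q) * \<omega> \<noteq> 0" using aux_den[OF q] False w0_def by auto
    show ?thesis unfolding hne[OF False] by (rule alg2[OF d])
  qed
  have P3: "hahn_sym_deriv q \<omega> I (\<lambda>x. f x / g x) t
              = (hahn_sym_deriv q \<omega> I f t * g (hsigma_inv q \<omega> t)
                 - f (hsigma_inv q \<omega> t) * hahn_sym_deriv q \<omega> I g t)
                / (g (hsigma q \<omega> t) * g (hsigma_inv q \<omega> t))"
    if gz: "g (hsigma q \<omega> t) * g (hsigma_inv q \<omega> t) \<noteq> 0" for t
  proof (cases "t = w0")
    case True
    have g0: "g w0 \<noteq> 0" using gz True fix1 by auto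
    have "((\<lambda>x. f x / g x) has_real_derivative (Df * g w0 - f w0 * Dg) / (g w0 * g w0)) (at w0 within I)"
      by (rule DERIV_divide[OF Df Dg g0])
    then have "vector_derivative (\<lambda>x. f x / g x) (at w0 within I) = (Df * g w0 - f w0 * Dg) / (g w0 * g w0)"
      by (rule aux_deriv[OF nb])
    then show ?thesis using True hf0 hg0 fix1 fix2 by (simp add: hahn_sym_deriv_def w0_def)
  next
    case False
    have d: "(q - 1 / q) * t + (1 + 1 / q) * \<omega> \<noteq> 0" using aux_den[OF q] False w0_def by auto
    have g1: "g (hsigma q \<omega> t) \<noteq> 0" "g (hsigma_inv q \<omega> t) \<noteq> 0" using gz by auto
    show ?thesis unfolding hne[OF False] by (rule alg3[OF d g1])
  qed
  have w0m': "w0 * (1 - q) = \<omega>" using q unfolding w0_def omega0_def by simp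
  have w0m: "\<omega> = w0 - w0 * q" using w0m' by (simp add: algebra_simps)
  have sig: "hsigma q \<omega> y = w0 + q * (y - w0)" for y
    unfolding hsigma_def w0m by (simp add: algebra_simps)
  have sigi: "hsigma_inv q \<omega> y = w0 + (y - w0) / q" for y
    using q unfolding hsigma_inv_def w0m by (simp add: field_simps)
  have seg: "w0 + l * (s - w0) \<in> I" if "s \<in> I" "0 \<le> l" "l \<le> 1" for s l
  proof (cases "s \<le> w0")
    case True
    have "s \<le> w0 + l * (s - w0)" "w0 + l * (s - w0) \<le> w0"
      using True that mult_left_le_one_le[of "w0 - s" l] mult_left_mono[of s w0 l] by (auto simp: algebra_simps)
    then show ?thesis using I(1,2) that w0_def mem_is_interval_1_I[OF I(1)] by blast
  next
    case False
    have "w0 \<le> w0 + l * (s - w0)" "w0 + l * (s - w0) \<le> s"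
      using False that mult_left_le_one_le[of "s - w0" l] mult_left_mono[of w0 s l] by (auto simp: algebra_simps)
    then show ?thesis using I(1,2) that w0_def mem_is_interval_1_I[OF I(1)] by blast
  qed
  have P4: "(\<forall>t\<in>qw_set q \<omega> I. hahn_sym_deriv q \<omega> I f t = 0) \<longleftrightarrow> (\<exists>c. \<forall>x\<in>I. f x = c)"
  proof
    assume H: "\<forall>t\<in>qw_set q \<omega> I. hahn_sym_deriv q \<omega> I f t = 0"
    have key: "f (hsigma q \<omega> (hsigma q \<omega> x)) = f x" if "x \<in> I" for x
    proof (cases "x = w0")
      case True then show ?thesis using fix1 by simp
    next
      case False
      define t where "t = hsigma q \<omega> x"
      have tq: "t \<in> qw_set q \<omega> I" using that unfolding t_def qw_set_def hsigma_def by auto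
      have tn: "t \<noteq> w0" using False q unfolding t_def sig by auto
      have d: "(q - 1 / q) * t + (1 + 1 / q) * \<omega> \<noteq> 0" using aux_den[OF q] tn w0_def by auto
      have "(f (hsigma q \<omega> t) - f (hsigma_inv q \<omega> t)) / ((q - 1 / q) * t + (1 + 1 / q) * \<omega>) = 0"
        using H tq hne[OF tn, of f] by metis
      hence "f (hsigma q \<omega> t) = f (hsigma_inv q \<omega> t)" using d by simp
      moreover have "hsigma_inv q \<omega> t = x" using q unfolding t_def sig sigi by simp
      ultimately show ?thesis unfolding t_def by simp
    qed
    have "f s = f w0" if s: "s \<in> I" for s
    proof -
      define v where "v n = w0 + (q^2)^n * (s - w0)" for n
      have vI: "v n \<in> I" for n unfolding v_def
      proof (rule seg[OF s])
        have "q^2 \<le> 1" using q by (simp add: power_le_one)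
        then show "(q^2)^n \<le> 1" using q by (simp add: power_le_one)
      qed (use q in auto)
      have vS: "v (Suc n) = hsigma q \<omega> (hsigma q \<omega> (v n))" for n
        unfolding v_def sig by (simp add: power2_eq_square algebra_simps)
      have fv: "f (v n) = f s" for n
      proof (induction n)
        case 0 then show ?case by (simp add: v_def)
      next
        case (Suc n) then show ?case using vS key vI by simp
      qed
      have "q * q < 1" using q mult_strict_mono[of q 1 q 1] by simp
      hence "norm (q^2) < 1" using q by (simp add: power2_eq_square)
      hence "(\<lambda>n. (q^2)^n) \<longlonglongrightarrow> 0" by (rule LIMSEQ_power_zero)
      hence "v \<longlonglongrightarrow> w0 + 0 * (s - w0)" unfolding v_def by (rule tendsto_add[OF tendsto_const tendsto_mult[OF _ tendsto_const]])
      hence "v \<longlonglongrightarrow> w0" by simp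
      moreover have "continuous (at w0 within I) f" using DERIV_continuous[OF Df] .
      ultimately have "(f \<circ> v) \<longlonglongrightarrow> f w0" using vI continuous_within_sequentially by blast
      moreover have "(f \<circ> v) = (\<lambda>n. f s)" using fv by auto
      ultimately show ?thesis using LIMSEQ_unique tendsto_const by metis
    qed
    then show "\<exists>c. \<forall>x\<in>I. f x = c" by blast
  next
    assume "\<exists>c. \<forall>x\<in>I. f x = c"
    then obtain c where c: "\<forall>x\<in>I. f x = c" by blast
    show "\<forall>t\<in>qw_set q \<omega> I. hahn_sym_deriv q \<omega> I f t = 0"
    proof
      fix t assume "t \<in> qw_set q \<omega> I"
      then obtain s where s: "s \<in> I" "t = q * s + \<omega>" unfolding qw_set_def by auto
      show "hahn_sym_deriv q \<omega> I f t = 0"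
      proof (cases "t = w0")
        case True
        have "((\<lambda>x. c) has_real_derivative 0) (at w0 within I)" by simp
        hence "(f has_real_derivative 0) (at w0 within I)"
          by (rule has_field_derivative_transform_within[where d=1]) (use c I(2) w0_def in auto)
        then show ?thesis using True hf0 DERIV_unique Df aux_deriv[OF nb] vf by metis
      next
        case False
        have ts: "t = w0 + q * (s - w0)" using s sig hsigma_def by simp
        have a: "hsigma_inv q \<omega> t = s" using q ts sigi by simp
        have b: "hsigma q \<omega> t = w0 + (q*q) * (s - w0)" unfolding sig ts by (simp add: algebra_simps)
        have "hsigma q \<omega> t \<in> I" unfolding b by (rule seg[OF s(1)]) (use q in \<open>auto simp: mult_le_one\<close>)
        then show ?thesis using hne[OF False] a c s by simp
      qed
    qed
  qed
  show ?thesis using P1 P2 P3 P4 by blast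
qed

end
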